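(* For $n\ge 3$, the cycle $C_n$ satisfies $\nu_*(C_n)=6n-4$.
   Context: For a finite simple graph $G=(V,E)$ with $\ell=|V|+|E|$, a construction sequence (c-sequence) is a bijection $x:\{1,\dots,\ell\}\to V\sqcup E$ such that every edge $e=uw$ satisfies $x^{-1}(e)>\max\{x^{-1}(u),x^{-1}(w)\}$. The cost of $x$ is $\nu(x)=\sum_{e=uw\in E}\big(2x^{-1}(e)-x^{-1}(u)-x^{-1}(w)\big)$, and $\nu_*(G)$ is the minimum of $\nu(x)$ over all c-sequences for $G$. $C_n$ is the cycle on $n$ vertices. *)

theory Defs
  imports Main
begin

definition simple_graph :: "'a set \<Rightarrow> 'a set set \<Rightarrow> bool" where
  "simple_graph V E \<longleftrightarrow> finite V \<and> (\<forall>e\<in>E. e \<subseteq> V \<and> card e = 2)"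

definition elems :: "'a set \<Rightarrow> 'a set set \<Rightarrow> ('a + 'a set) set" where
  "elems V E = V <+> E"

definition pos :: "'a set \<Rightarrow> 'a set set \<Rightarrow> (nat \<Rightarrow> 'a + 'a set) \<Rightarrow> ('a + 'a set) \<Rightarrow> nat" where
  "pos V E x z = inv_into {1..card V + card E} x z"

definition c_sequence :: "'a set \<Rightarrow> 'a set set \<Rightarrow> (nat \<Rightarrow> 'a + 'a set) \<Rightarrow> bool" where
  "c_sequence V E x \<longleftrightarrow>
     bij_betw x {1..card V + card E} (elems V E) \<and>
     (\<forall>e\<in>E. \<forall>u\<in>e. pos V E x (Inr e) > pos V E x (Inl u))"

text \<open>Cost: for e = uw, 2 x^{-1}(e) - x^{-1}(u) - x^{-1}(w) = sum over endpoints of (x^{-1}(e) - x^{-1}(v)).\<close>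
definition cost :: "'a set \<Rightarrow> 'a set set \<Rightarrow> (nat \<Rightarrow> 'a + 'a set) \<Rightarrow> int" where
  "cost V E x = (\<Sum>e\<in>E. \<Sum>u\<in>e. int (pos V E x (Inr e)) - int (pos V E x (Inl u)))"

definition nu_star :: "'a set \<Rightarrow> 'a set set \<Rightarrow> int" where
  "nu_star V E = Min {cost V E x | x. c_sequence V E x}"

definition cycle_V :: "nat \<Rightarrow> nat set" where
  "cycle_V n = {0..<n}"

definition cycle_E :: "nat \<Rightarrow> nat set set" where
  "cycle_E n = {{i, (i + 1) mod n} | i. i < n}"

end

theory Submission
  imports Defs
begin

lemma succ_eq: "(i::nat) < n \<Longrightarrow> Suc i mod n = (if i = n-1 then 0 else i+1)"
  by (cases "i + 1 < n") auto

lemma edge_inj: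
  fixes n i j :: nat
  assumes "n \<ge> 3" "i < n" "j < n" "{i,(i+1) mod n} = {j,(j+1) mod n}"
  shows "i = j"
proof -
  have a: "(i+1) mod n = (if i = n-1 then 0 else i+1)" "(j+1) mod n = (if j = n-1 then 0 else j+1)"
    using succ_eq assms by auto
  show ?thesis using assms(1-4) unfolding a by (auto simp: doubleton_eq_iff split: if_splits)
qed

lemma cycleE_img: "cycle_E n = (\<lambda>i. {i,(i+1) mod n}) ` {..<n}"
  unfolding cycle_E_def by auto

lemma inj_edge: "(n::nat) \<ge> 3 \<Longrightarrow> inj_on (\<lambda>i. {i,(i+1) mod n}) {..<n}"
  unfolding inj_on_def using edge_inj[of n] by blast

lemma card_E: "(n::nat) \<ge> 3 \<Longrightarrow> card (cycle_E n) = n"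
  unfolding cycleE_img using card_image[OF inj_edge] by simp

lemma closed_all:
  fixes n a :: nat
  assumes "S \<subseteq> {..<n}" "a \<in> S" "\<forall>i\<in>S. (i+1) mod n \<in> S"
  shows "S = {..<n}"
proof -
  have n: "a < n" using assms by auto
  have k: "(a + k) mod n \<in> S" for k
  proof (induction k)
    case 0 then show ?case using assms n by simp
  next
    case (Suc k)
    have "(a + Suc k) mod n = ((a + k) mod n + 1) mod n" by (simp add: mod_Suc_eq)
    then show ?case using Suc assms(3) by simp
  qed
  have "j \<in> S" if "j < n" for j
  proof -
    have "(a + (n - a + j)) mod n = j" using n that by simp
    then show ?thesis using k[of "n - a + j"] by simp
  qed
  then show ?thesis using assms(1) by auto
qed

lemma forest_bound:
  fixes n :: nat
  assumes "S \<subseteq> {..<n}" "S \<noteq> {}" "S \<noteq> {..<n}"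
  shows "card {i\<in>S. (i+1) mod n \<in> S} < card S"
proof -
  have fin: "finite S" using assms(1) by (rule finite_subset) simp
  have "{i\<in>S. (i+1) mod n \<in> S} \<noteq> S"
  proof
    assume "{i\<in>S. (i+1) mod n \<in> S} = S"
    then have "\<forall>i\<in>S. (i+1) mod n \<in> S" by blast
    moreover obtain a where "a \<in> S" using assms by auto
    ultimately show False using closed_all assms by blast
  qed
  then show ?thesis using fin by (intro psubset_card_mono) auto
qed


lemma edge_card: "(n::nat) \<ge> 3 \<Longrightarrow> e \<in> cycle_E n \<Longrightarrow> card e = 2"
  unfolding cycle_E_def using succ_eq by fastforce

lemma edge_sub: "(n::nat) \<ge> 3 \<Longrightarrow> e \<in> cycle_E n \<Longrightarrow> e \<subseteq> {..<n}"
  unfolding cycle_E_def by auto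

lemma shift_sum:
  fixes g :: "nat \<Rightarrow> int"
  assumes "n \<ge> 1"
  shows "(\<Sum>i<n. g (Suc i mod n)) = (\<Sum>i<n. g i)"
proof -
  obtain m where n: "n = Suc m" using assms by (cases n) auto
  have "(\<Sum>i<n. g (Suc i mod n)) = (\<Sum>i<m. g (Suc i mod n)) + g (Suc m mod n)"
    by (simp add: n)
  also have "(\<Sum>i<m. g (Suc i mod n)) = (\<Sum>i<m. g (Suc i))"
    by (rule sum.cong) (auto simp: n)
  also have "g (Suc m mod n) = g 0" by (simp add: n)
  also have "(\<Sum>i<m. g (Suc i)) + g 0 = (\<Sum>i<n. g i)"
    by (simp only: n sum.lessThan_Suc_shift)
  finally show ?thesis .
qed

lemma cycle_sum:
  fixes g :: "nat \<Rightarrow> int"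
  assumes "n \<ge> 3"
  shows "(\<Sum>e\<in>cycle_E n. \<Sum>u\<in>e. g u) = 2 * (\<Sum>i<n. g i)"
proof -
  have "(\<Sum>e\<in>cycle_E n. \<Sum>u\<in>e. g u) = (\<Sum>i<n. \<Sum>u\<in>{i, (i+1) mod n}. g u)"
    unfolding cycleE_img using sum.reindex[OF inj_edge[OF assms], of "\<lambda>e. \<Sum>u\<in>e. g u"]
    by simp
  also have "\<dots> = (\<Sum>i<n. g i + g (Suc i mod n))"
  proof (rule sum.cong)
    fix i assume "i \<in> {..<n}"
    then have "i \<noteq> Suc i mod n" using succ_eq[of i n] assms by auto
    then show "(\<Sum>u\<in>{i, (i+1) mod n}. g u) = g i + g (Suc i mod n)" by simp
  qed simp
  also have "\<dots> = 2 * (\<Sum>i<n. g i)"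
    using shift_sum[of n g] assms by (simp add: sum.distrib)
  finally show ?thesis .
qed

lemma cost_formula:
  assumes "n \<ge> 3"
  shows "cost (cycle_V n) (cycle_E n) x =
     2 * (\<Sum>e\<in>cycle_E n. int (pos (cycle_V n) (cycle_E n) x (Inr e)))
   - 2 * (\<Sum>i<n. int (pos (cycle_V n) (cycle_E n) x (Inl i)))"
proof -
  let ?p = "pos (cycle_V n) (cycle_E n) x"
  have "cost (cycle_V n) (cycle_E n) x =
     (\<Sum>e\<in>cycle_E n. 2 * int (?p (Inr e)) - (\<Sum>u\<in>e. int (?p (Inl u))))"
    unfolding cost_def
  proof (rule sum.cong)
    fix e assume "e \<in> cycle_E n"
    then have "card e = 2" using edge_card assms by blast
    then show "(\<Sum>u\<in>e. int (?p (Inr e)) - int (?p (Inl u))) =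
        2 * int (?p (Inr e)) - (\<Sum>u\<in>e. int (?p (Inl u)))"
      by (simp add: sum_subtractf)
  qed simp
  also have "\<dots> = 2 * (\<Sum>e\<in>cycle_E n. int (?p (Inr e))) - (\<Sum>e\<in>cycle_E n. \<Sum>u\<in>e. int (?p (Inl u)))"
    by (simp add: sum_subtractf sum_distrib_left)
  also have "\<dots> = 2 * (\<Sum>e\<in>cycle_E n. int (?p (Inr e))) - 2 * (\<Sum>i<n. int (?p (Inl i)))"
    using cycle_sum[OF assms, of "\<lambda>u. int (?p (Inl u))"] by simp
  finally show ?thesis .
qed

lemma pos_bij:
  "c_sequence V E x \<Longrightarrow> bij_betw (pos V E x) (elems V E) {1..card V + card E}"
  unfolding c_sequence_def pos_def by (auto intro: bij_betw_inv_into)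

lemma card_split:
  assumes "finite V" "finite E"
  shows "card {z \<in> V <+> E. P z} = card {v\<in>V. P (Inl v)} + card {e\<in>E. P (Inr e)}"
proof -
  have "{z \<in> V <+> E. P z} = {v\<in>V. P (Inl v)} <+> {e\<in>E. P (Inr e)}" by auto
  then show ?thesis using assms by (simp add: card_Plus)
qed

lemma count_le:
  assumes "c_sequence V E x" "finite V" "finite E" "t \<le> card V + card E"
  shows "card {v\<in>V. pos V E x (Inl v) \<le> t} + card {e\<in>E. pos V E x (Inr e) \<le> t} = t"
proof -
  let ?p = "pos V E x"
  have b: "bij_betw ?p (elems V E) {1..card V + card E}" using pos_bij[OF assms(1)] .
  let ?A = "{z \<in> elems V E. ?p z \<le> t}"
  have "?p ` ?A = {1..t}"
  proof
    show "?p ` ?A \<subseteq> {1..t}" using b by (auto simp: bij_betw_def)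
    show "{1..t} \<subseteq> ?p ` ?A"
    proof
      fix k assume k: "k \<in> {1..t}"
      then have "k \<in> ?p ` elems V E" using b assms(4) by (auto simp: bij_betw_def)
      then obtain z where "z \<in> elems V E" "k = ?p z" by auto
      then show "k \<in> ?p ` ?A" using k by auto
    qed
  qed
  moreover have "inj_on ?p ?A" using b by (auto simp: bij_betw_def intro: inj_on_subset)
  ultimately have "card ?A = t" using card_image by fastforce
  then show ?thesis using card_split[OF assms(2,3), of "\<lambda>z. ?p z \<le> t"] by (simp add: elems_def)
qed

lemma card_of_bool: "finite A \<Longrightarrow> card {a\<in>A. P a} = (\<Sum>a\<in>A. of_bool (P a)::nat)"
proof -
  assume "finite A"
  then have "sum (\<lambda>_. 1::nat) {a\<in>A. P a} = (\<Sum>a\<in>A. if P a then 1 else 0)" by (rule sum.inter_filter)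
  then show ?thesis by (simp only: card_eq_sum of_bool_def)
qed

lemma sum_swap:
  fixes f :: "'b \<Rightarrow> nat"
  assumes "finite A" "\<forall>a\<in>A. f a \<le> L"
  shows "sum f A + (\<Sum>t<L. card {a\<in>A. f a \<le> t}) = card A * L"
proof -
  have 1: "card {a\<in>A. f a \<le> t} + card {a\<in>A. t < f a} = card A" for t
  proof -
    have "{a\<in>A. f a \<le> t} \<union> {a\<in>A. t < f a} = A" "{a\<in>A. f a \<le> t} \<inter> {a\<in>A. t < f a} = {}" by auto
    then show ?thesis using assms(1) card_Un_disjoint[of "{a\<in>A. f a \<le> t}" "{a\<in>A. t < f a}"]
      by simp
  qed
  have 2: "(\<Sum>t<L. card {a\<in>A. t < f a}) = sum f A"
  proof -
    have "(\<Sum>t<L. card {a\<in>A. t < f a}) = (\<Sum>t<L. \<Sum>a\<in>A. of_bool (t < f a))"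
      using assms(1) by (simp only: card_of_bool)
    also have "\<dots> = (\<Sum>a\<in>A. \<Sum>t<L. of_bool (t < f a))" by (rule sum.swap)
    also have "\<dots> = (\<Sum>a\<in>A. card {t\<in>{..<L}. t < f a})"
      by (simp only: card_of_bool finite_lessThan)
    also have "\<dots> = sum f A"
    proof (rule sum.cong)
      fix a assume "a \<in> A"
      then have "{t\<in>{..<L}. t < f a} = {..<f a}" using assms(2) by auto
      then show "card {t\<in>{..<L}. t < f a} = f a" by simp
    qed simp
    finally show ?thesis .
  qed
  have "(\<Sum>t<L. card {a\<in>A. f a \<le> t}) + (\<Sum>t<L. card {a\<in>A. t < f a}) = card A * L"
    by (simp add: sum.distrib[symmetric] 1)
  then show ?thesis using 2 by simp
qed


definition fb :: "nat \<Rightarrow> int" where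
  "fb t = (if t = 0 then 0 else if even t then 2 else 1)"

lemma fb_sum: "(\<Sum>t<2 * Suc m. fb t) = 3 * int (Suc m) - 2"
proof (induction m)
  case 0 then show ?case by (simp add: fb_def numeral_2_eq_2)
next
  case (Suc m)
  have "2 * Suc (Suc m) = Suc (Suc (2 * Suc m))" by simp
  then have "(\<Sum>t<2 * Suc (Suc m). fb t) = (\<Sum>t<2 * Suc m. fb t) + fb (2 * Suc m) + fb (Suc (2 * Suc m))"
    by simp
  then show ?case using Suc by (simp add: fb_def)
qed

lemma lower:
  assumes n3: "n \<ge> 3" and cs: "c_sequence (cycle_V n) (cycle_E n) x"
  shows "cost (cycle_V n) (cycle_E n) x \<ge> 6 * int n - 4"
proof -
  let ?V = "cycle_V n" and ?E = "cycle_E n"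
  let ?p = "pos ?V ?E x"
  have V: "?V = {..<n}" by (simp add: cycle_V_def atLeast0LessThan)
  have cV: "card ?V = n" using V by simp
  have cE: "card ?E = n" using card_E n3 by simp
  have fE: "finite ?E" using cE n3 card.infinite by fastforce
  have fV: "finite ?V" using V by simp
  have b: "bij_betw ?p (elems ?V ?E) {1..2*n}" using pos_bij[OF cs] cV cE by (simp add: mult_2)
  have hE: "\<forall>e\<in>?E. ?p (Inr e) \<le> 2*n" using b by (auto simp: bij_betw_def elems_def)
  have hV: "\<forall>v\<in>?V. ?p (Inl v) \<le> 2*n" using b by (auto simp: bij_betw_def elems_def)
  have cond: "\<forall>e\<in>?E. \<forall>u\<in>e. ?p (Inr e) > ?p (Inl u)" using cs by (simp add: c_sequence_def)
  define a where "a t = card {v\<in>?V. ?p (Inl v) \<le> t}" for t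
  define bb where "bb t = card {e\<in>?E. ?p (Inr e) \<le> t}" for t
  have sE: "(\<Sum>e\<in>?E. ?p (Inr e)) + (\<Sum>t<2*n. bb t) = n * (2*n)"
    using sum_swap[OF fE hE] cE by (simp add: bb_def)
  have sV: "(\<Sum>v\<in>?V. ?p (Inl v)) + (\<Sum>t<2*n. a t) = n * (2*n)"
    using sum_swap[OF fV hV] cV by (simp add: a_def)
  have cf: "cost ?V ?E x = 2 * (\<Sum>t<2*n. int (a t) - int (bb t))"
  proof -
    have e1: "int (\<Sum>e\<in>?E. ?p (Inr e)) + int (\<Sum>t<2*n. bb t) = int n * (2 * int n)"
      using arg_cong[OF sE, of int] by simp
    have e2: "int (\<Sum>v\<in>?V. ?p (Inl v)) + int (\<Sum>t<2*n. a t) = int n * (2 * int n)"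
      using arg_cong[OF sV, of int] by simp
    have "cost ?V ?E x = 2 * int (\<Sum>e\<in>?E. ?p (Inr e)) - 2 * int (\<Sum>v\<in>?V. ?p (Inl v))"
      using cost_formula[OF n3, of x] V by simp
    also have "\<dots> = 2 * (int (\<Sum>t<2*n. a t) - int (\<Sum>t<2*n. bb t))" using e1 e2 by simp
    also have "\<dots> = 2 * (\<Sum>t<2*n. int (a t) - int (bb t))" by (simp add: sum_subtractf)
    finally show ?thesis .
  qed
  have key: "int (a t) - int (bb t) \<ge> fb t" if t: "t < 2*n" for t
  proof -
    have ab: "a t + bb t = t" using count_le[OF cs fV fE, of t] t cV cE by (simp add: a_def bb_def)
    define S where "S = {v\<in>?V. ?p (Inl v) \<le> t}"
    have S: "S \<subseteq> {..<n}" using V by (auto simp: S_def)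
    have sub: "{e\<in>?E. ?p (Inr e) \<le> t} \<subseteq> (\<lambda>i. {i, (i+1) mod n}) ` {i\<in>S. (i+1) mod n \<in> S}"
    proof
      fix e assume e: "e \<in> {e\<in>?E. ?p (Inr e) \<le> t}"
      then obtain i where i: "i < n" "e = {i, (i+1) mod n}" unfolding cycle_E_def by auto
      have "?p (Inl i) < ?p (Inr e)" "?p (Inl ((i+1) mod n)) < ?p (Inr e)" using cond e i by auto
      moreover have "i \<in> ?V" "(i+1) mod n \<in> ?V" using V i by auto
      ultimately have "i \<in> S" "(i+1) mod n \<in> S" using e by (auto simp: S_def)
      then show "e \<in> (\<lambda>i. {i, (i+1) mod n}) ` {i\<in>S. (i+1) mod n \<in> S}" using i by auto
    qed
    have fS: "finite {i\<in>S. (i+1) mod n \<in> S}" by (rule finite_subset[of _ "{..<n}"]) (use S in auto)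
    have bbS: "bb t \<le> card {i\<in>S. (i+1) mod n \<in> S}"
      unfolding bb_def using card_mono[OF finite_imageI[OF fS] sub] card_image_le[OF fS, of "\<lambda>i. {i, (i+1) mod n}"] by linarith
    have aS: "a t = card S" by (simp add: a_def S_def)
    have "t = 0 \<or> a t > bb t"
    proof (cases "S = {..<n}")
      case True
      then show ?thesis using aS ab t by simp
    next
      case False
      show ?thesis
      proof (cases "S = {}")
        case True
        then show ?thesis using bbS aS ab by simp
      next
        case F2: False
        show ?thesis using forest_bound[OF S F2 False] bbS aS by simp
      qed
    qed
    then show ?thesis using ab unfolding fb_def by presburger
  qed
  have "(\<Sum>t<2*n. fb t) \<le> (\<Sum>t<2*n. int (a t) - int (bb t))"
    by (rule sum_mono) (use key in auto)
  moreover obtain m where "n = Suc m" using n3 by (cases n) auto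
  ultimately have "3 * int n - 2 \<le> (\<Sum>t<2*n. int (a t) - int (bb t))" using fb_sum by simp
  then show ?thesis using cf by simp
qed


definition xs :: "nat \<Rightarrow> nat \<Rightarrow> nat + nat set" where
  "xs n t = (if t = 1 then Inl 0 else if t = 2*n then Inr {n-1, 0}
             else if even t then Inl (t div 2) else Inr {t div 2 - 1, t div 2})"

lemma xs_inj: "n \<ge> 3 \<Longrightarrow> inj_on (xs n) {1..2*n}"
  unfolding inj_on_def xs_def
  by (auto simp: doubleton_eq_iff split: if_splits elim!: evenE oddE)

lemma xs_into: "n \<ge> 3 \<Longrightarrow> xs n ` {1..2*n} \<subseteq> elems (cycle_V n) (cycle_E n)"
proof
  fix z assume n: "n \<ge> 3" and "z \<in> xs n ` {1..2*n}"
  then obtain t where t: "t \<in> {1..2*n}" "z = xs n t" by auto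
  show "z \<in> elems (cycle_V n) (cycle_E n)"
  proof (cases "t = 1 \<or> t = 2*n \<or> even t")
    case True
    then show ?thesis using t n unfolding xs_def elems_def cycle_V_def cycle_E_def
      by (auto intro!: exI[of _ "n-1"])
  next
    case False
    then have z: "z = Inr {t div 2 - 1, t div 2}" using t by (simp add: xs_def)
    have "t div 2 - 1 < n" "t div 2 < n" "t div 2 \<ge> 1" using t False by auto
    then have "{t div 2 - 1, t div 2} = {t div 2 - 1, (t div 2 - 1 + 1) mod n}" by simp
    then have "{t div 2 - 1, t div 2} \<in> cycle_E n" unfolding cycle_E_def using \<open>t div 2 - 1 < n\<close> by blast
    then show ?thesis using z by (simp add: elems_def Plus_def)
  qed
qed

lemma xs_bij: "n \<ge> 3 \<Longrightarrow> bij_betw (xs n) {1..card (cycle_V n) + card (cycle_E n)} (elems (cycle_V n) (cycle_E n))"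
proof -
  assume n: "n \<ge> 3"
  have c: "card (cycle_V n) + card (cycle_E n) = 2*n" using card_E[OF n] by (simp add: cycle_V_def)
  have fin: "finite (elems (cycle_V n) (cycle_E n))" using card_E[OF n] n card.infinite
    by (fastforce simp: elems_def cycle_V_def)
  have ce: "card (elems (cycle_V n) (cycle_E n)) = 2*n"
    using c card_Plus[of "cycle_V n" "cycle_E n"] fin by (simp add: elems_def)
  have "card (xs n ` {1..2*n}) = 2*n" using card_image[OF xs_inj[OF n]] by simp
  then have "xs n ` {1..2*n} = elems (cycle_V n) (cycle_E n)"
    using card_subset_eq[OF fin xs_into[OF n]] ce by simp
  then show ?thesis using xs_inj[OF n] c by (simp add: bij_betw_def)
qed

lemma pos_xs:
  assumes "n \<ge> 3" "t \<in> {1..2*n}" "xs n t = z"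
  shows "pos (cycle_V n) (cycle_E n) (xs n) z = t"
proof -
  have c: "card (cycle_V n) + card (cycle_E n) = 2*n" using card_E[OF assms(1)] by (simp add: cycle_V_def)
  show ?thesis unfolding pos_def c using inv_into_f_f[OF xs_inj[OF assms(1)] assms(2)] assms(3) by simp
qed

lemma pos_V:
  assumes "n \<ge> 3" "v < n"
  shows "pos (cycle_V n) (cycle_E n) (xs n) (Inl v) = (if v = 0 then 1 else 2*v)"
  using assms by (intro pos_xs) (auto simp: xs_def)

lemma pos_E:
  assumes "n \<ge> 3" "i < n"
  shows "pos (cycle_V n) (cycle_E n) (xs n) (Inr {i, (i+1) mod n}) = (if i = n-1 then 2*n else 2*i+3)"
proof (cases "i = n-1")
  case True
  then have "{i, (i+1) mod n} = {n-1, 0}" using assms by auto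
  then show ?thesis using True assms by (simp, intro pos_xs) (auto simp: xs_def)
next
  case False
  then have "{i, (i+1) mod n} = {(2*i+3) div 2 - 1, (2*i+3) div 2}" using assms by auto
  then show ?thesis using False assms by (simp, intro pos_xs) (auto simp: xs_def)
qed

lemma xs_cseq: "n \<ge> 3 \<Longrightarrow> c_sequence (cycle_V n) (cycle_E n) (xs n)"
  unfolding c_sequence_def
proof (intro conjI xs_bij ballI)
  fix e u assume n: "n \<ge> 3" and e: "e \<in> cycle_E n" and u: "u \<in> e"
  then obtain i where i: "i < n" "e = {i, (i+1) mod n}" unfolding cycle_E_def by auto
  have "u < n" using u i by auto
  then show "pos (cycle_V n) (cycle_E n) (xs n) (Inr e) > pos (cycle_V n) (cycle_E n) (xs n) (Inl u)"
    using pos_E[OF n i(1)] pos_V[OF n] i u succ_eq[of i n] by (auto split: if_splits)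
qed

lemma sum_E: "(n::nat) \<ge> 3 \<Longrightarrow> (\<Sum>e\<in>cycle_E n. g e) = (\<Sum>i<n. g {i, (i+1) mod n})"
  unfolding cycleE_img using sum.reindex[OF inj_edge, of n g] by simp

lemma xs_cost: 
  assumes n: "n \<ge> 3"
  shows "cost (cycle_V n) (cycle_E n) (xs n) = 6 * int n - 4"
proof -
  let ?p = "pos (cycle_V n) (cycle_E n) (xs n)"
  have "(\<Sum>e\<in>cycle_E n. int (?p (Inr e))) = (\<Sum>i<n. int (?p (Inr {i, (i+1) mod n})))"
    by (rule sum_E[OF n])
  also have "\<dots> = (\<Sum>i<n. int (if i = n-1 then 2*n else 2*i+3))"
    using pos_E[OF n] by (intro sum.cong) auto
  finally have 1: "(\<Sum>e\<in>cycle_E n. int (?p (Inr e))) = (\<Sum>i<n. int (if i = n-1 then 2*n else 2*i+3))" .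
  have 2: "(\<Sum>i<n. int (?p (Inl i))) = (\<Sum>i<n. int (if i = 0 then 1 else 2*i))"
    using pos_V[OF n] by (intro sum.cong) auto
  have "(\<Sum>i<n. int (if i = n-1 then 2*n else 2*i+3)) - (\<Sum>i<n. int (if i = 0 then 1 else 2*i))
     = (\<Sum>i<n. 3 - of_bool (i = 0) - of_bool (i = n-1))"
    unfolding sum_subtractf[symmetric] using n by (intro sum.cong) auto
  also have "\<dots> = 3 * int n - 2"
    using n by (simp add: sum_subtractf)
  finally have 3: "(\<Sum>i<n. int (if i = n-1 then 2*n else 2*i+3)) - (\<Sum>i<n. int (if i = 0 then 1 else 2*i)) = 3 * int n - 2" .
  show ?thesis using cost_formula[OF n, of "xs n"] 1 2 3 by simp
qed


lemma upper:
  assumes n3: "n \<ge> 3" and cs: "c_sequence (cycle_V n) (cycle_E n) x"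
  shows "cost (cycle_V n) (cycle_E n) x \<le> 4 * int n * int n"
proof -
  let ?V = "cycle_V n" and ?E = "cycle_E n"
  let ?p = "pos ?V ?E x"
  have cV: "card ?V = n" by (simp add: cycle_V_def)
  have cE: "card ?E = n" using card_E n3 by simp
  have b: "bij_betw ?p (elems ?V ?E) {1..2*n}" using pos_bij[OF cs] cV cE by (simp add: mult_2)
  have hE0: "\<forall>e\<in>?E. ?p (Inr e) \<le> 2*n" using b by (auto simp: bij_betw_def elems_def)
  have hE: "\<forall>e\<in>?E. int (?p (Inr e)) \<le> 2*int n" using hE0 by fastforce
  have "(\<Sum>e\<in>?E. int (?p (Inr e))) \<le> of_nat (card ?E) * (2 * int n)"
    by (rule sum_bounded_above) (use hE in auto)
  moreover have "(\<Sum>i<n. int (?p (Inl i))) \<ge> 0" by (rule sum_nonneg) simp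
  ultimately show ?thesis using cost_formula[OF n3, of x] cE by simp
qed

theorem theorem10:
  fixes n :: nat
  assumes "n \<ge> 3"
  shows "nu_star (cycle_V n) (cycle_E n) = 6 * int n - 4"
  unfolding nu_star_def
proof (rule Min_eqI)
  let ?C = "{cost (cycle_V n) (cycle_E n) x | x. c_sequence (cycle_V n) (cycle_E n) x}"
  have "?C \<subseteq> {6 * int n - 4 .. 4 * int n * int n}"
    using lower[OF assms] upper[OF assms] by auto
  then show "finite ?C" by (rule finite_subset) simp
  show "\<And>y. y \<in> ?C \<Longrightarrow> 6 * int n - 4 \<le> y" using lower[OF assms] by auto
  show "6 * int n - 4 \<in> ?C" using xs_cseq[OF assms] xs_cost[OF assms] by force
qed

end
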